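(* For $m,n\ge2$, \[ \sum_{k=2}^m\sum_{l=2}^n\frac{(-1)^{k+l}G_{k,l}}{m-k+n-l+1}=\frac{1}{m+n-1}-\frac{1}{mn}. \]
   Context: The generalized Gregory coefficients $G_{m,n}$ are defined by $\sum_{m,n\ge0}G_{m,n}x^my^n=\dfrac{y\log^2(1+x)-x\log^2(1+y)}{\log(1+x)-\log(1+y)}$ (formal power series; $\log^ku=(\log u)^k$). *)

theory Defs
  imports "HOL-Computational_Algebra.Formal_Power_Series"
begin

text \<open>Bivariate formal power series in x and y are modelled as real fps fps:
  the outer variable is x, the coefficients are power series in y.\<close>

definition bX :: "real fps fps" where "bX = fps_X"
definition bY :: "real fps fps" where "bY = fps_const fps_X"

text \<open>log(1+x) and log(1+y) as bivariate series\<close>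
definition logX :: "real fps fps" where
  "logX = Abs_fps (\<lambda>m. fps_const (fps_nth (fps_ln 1) m))"
definition logY :: "real fps fps" where
  "logY = fps_const (fps_ln 1)"

text \<open>The generating series: the (unique, as real fps fps is an integral domain)
  series F with (log(1+x) - log(1+y)) * F = y log^2(1+x) - x log^2(1+y).\<close>
definition gregory_gf :: "real fps fps" where
  "gregory_gf = (THE F. (logX - logY) * F = bY * logX ^ 2 - bX * logY ^ 2)"

definition gen_gregory :: "nat \<Rightarrow> nat \<Rightarrow> real" where
  "gen_gregory m n = fps_nth (fps_nth gregory_gf m) n"

end

theory Submission
  imports Defs
begin

unbundle fps_syntax

abbreviation "LL \<equiv> (fps_ln 1 :: real fps)"

definition QQ :: "real fps fps" where
  "QQ = Abs_fps (\<lambda>p. Abs_fps (\<lambda>q. (-1)^(p+q) / real (p+q+1)))"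

lemma LL0[simp]: "LL $ 0 = 0" by (simp add: fps_ln_nth)

lemma logX_nth[simp]: "logX $ k = fps_const (LL $ k)" by (simp add: logX_def)
lemma logY_nth[simp]: "logY $ k = (if k = 0 then LL else 0)" by (simp add: logY_def)
lemma QQ_nth[simp]: "QQ $ p $ q = (-1)^(p+q) / real (p+q+1)" by (simp add: QQ_def)

lemma Qeq: "(bX - bY) * QQ = logX - logY"
proof (rule fps_ext)
  fix p show "((bX - bY) * QQ) $ p = (logX - logY) $ p"
  proof (rule fps_ext)
    fix q
    show "((bX - bY) * QQ) $ p $ q = (logX - logY) $ p $ q"
      by (cases p; cases q) (auto simp: bX_def bY_def algebra_simps fps_ln_nth)
  qed
qed

lemma XY_ne: "bX - bY \<noteq> 0"
proof
  assume "bX - bY = 0"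
  then have "(bX - bY) $ 1 $ 0 = 0" by simp
  then show False by (simp add: bX_def bY_def)
qed

lemma log_ne: "logX - logY \<noteq> 0"
proof
  assume "logX - logY = 0"
  then have "(logX - logY) $ 1 $ 0 = 0" by simp
  then show False by (simp add: fps_ln_nth)
qed

definition WW :: "real fps fps" where "WW = fps_right_inverse QQ (inverse (QQ $ 0))"

lemma QW: "QQ * WW = 1"
  unfolding WW_def
proof (rule fps_right_inverse)
  have "QQ $ 0 $ 0 \<noteq> 0" by simp
  then show "QQ $ 0 * inverse (QQ $ 0) = 1"
    using inverse_mult_eq_1[of "QQ $ 0"] by (simp add: mult.commute)
qed

lemma logW: "(logX - logY) * WW = bX - bY"
proof -
  have "(logX - logY) * WW = (bX - bY) * (QQ * WW)" using Qeq by (simp add: mult.assoc)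
  then show ?thesis using QW by simp
qed

definition FF1 where "FF1 = (logX + logY) * bY - logY^2 * WW"
definition FF2 where "FF2 = (logX + logY) * bX - logX^2 * WW"

lemma FF1_eq: "(logX - logY) * FF1 = bY * logX ^ 2 - bX * logY ^ 2"
proof -
  have "(logX - logY) * FF1 = (logX - logY) * (logX + logY) * bY - logY^2 * ((logX - logY) * WW)"
    unfolding FF1_def by (simp add: algebra_simps)
  also have "\<dots> = bY * logX ^ 2 - bX * logY ^ 2" unfolding logW by (simp add: algebra_simps power2_eq_square)
  finally show ?thesis .
qed

lemma FF2_eq: "(logX - logY) * FF2 = bY * logX ^ 2 - bX * logY ^ 2"
proof -
  have "(logX - logY) * FF2 = (logX - logY) * (logX + logY) * bX - logX^2 * ((logX - logY) * WW)"
    unfolding FF2_def by (simp add: algebra_simps)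
  also have "\<dots> = bY * logX ^ 2 - bX * logY ^ 2" unfolding logW by (simp add: algebra_simps power2_eq_square)
  finally show ?thesis .
qed

lemma G_unique: "(logX - logY) * F = bY * logX ^ 2 - bX * logY ^ 2 \<Longrightarrow> gregory_gf = F"
  unfolding gregory_gf_def
proof (rule the_equality)
  fix F' assume "(logX - logY) * F' = bY * logX ^ 2 - bX * logY ^ 2"
    "(logX - logY) * F = bY * logX ^ 2 - bX * logY ^ 2"
  then show "F' = F" using log_ne mult_left_cancel by metis
qed

lemma G1: "gregory_gf = FF1" using G_unique FF1_eq by blast
lemma G2: "gregory_gf = FF2" using G_unique FF2_eq by blast

lemma logY2: "logY^2 = fps_const (LL^2)" by (simp add: logY_def fps_const_power)

lemma sq0: "(LL^2) $ 0 = 0" "(LL^2) $ 1 = 0"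
  by (simp_all add: power2_eq_square)

lemma logX2: "(logX^2) $ 0 = 0" "(logX^2) $ 1 = 0"
  by (simp_all add: power2_eq_square)

lemma Gk0: "gregory_gf $ k $ 0 = 0"
  unfolding G1 FF1_def logY2 by (simp add: bY_def sq0)

lemma Gk1: "gregory_gf $ k $ 1 = LL $ k"
proof -
  have "(LL\<^sup>2 * WW $ k) $ 1 = 0" using sq0 by (simp add: fps_mult_nth_1)
  then show ?thesis unfolding G1 FF1_def logY2 by (simp add: bY_def)
qed

lemma G0l: "gregory_gf $ 0 $ l = 0"
  unfolding G2 FF2_def by (simp add: bX_def logX2)

lemma G1l: "gregory_gf $ 1 $ l = LL $ l"
proof -
  have "(logX\<^sup>2 * WW) $ 1 = 0" using logX2 by (simp add: fps_mult_nth_1)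
  then show ?thesis unfolding G2 FF2_def by (simp add: bX_def)
qed


lemma G1l': "gregory_gf $ Suc 0 $ l = LL $ l" using G1l by simp
lemma Gk1': "gregory_gf $ k $ Suc 0 = LL $ k" using Gk1 by simp

definition GT :: "real fps fps" where
  "GT = Abs_fps (\<lambda>k. Abs_fps (\<lambda>l. if 2 \<le> k \<and> 2 \<le> l then gregory_gf $ k $ l else 0))"

lemma GT_eq: "GT = gregory_gf - logX * bY - bX * logY + bX * bY"
proof (rule fps_ext)
  fix k show "GT $ k = (gregory_gf - logX * bY - bX * logY + bX * bY) $ k"
  proof (rule fps_ext)
    fix l :: nat
    consider "k = 0" | "k = 1" | "k \<ge> 2 \<and> l = 0" | "k \<ge> 2 \<and> l = 1" | "k \<ge> 2 \<and> l \<ge> 2" by linarith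
    then show "GT $ k $ l = (gregory_gf - logX * bY - bX * logY + bX * bY) $ k $ l"
      by cases (auto simp: GT_def bX_def bY_def G0l G1l' Gk0 Gk1' fps_ln_nth)
  qed
qed

lemma Geq: "(logX - logY) * gregory_gf = bY * logX ^ 2 - bX * logY ^ 2"
  using G1 FF1_eq by simp

lemma GTQ: "GT * QQ = bX * bY * QQ - logX * logY"
proof -
  have "(bX - bY) * (GT * QQ) = (bX - bY) * (bX * bY * QQ - logX * logY)"
    unfolding GT_eq using Geq Qeq by algebra
  then show ?thesis using XY_ne mult_left_cancel by metis
qed


lemma sign_split: "(-1::real)^a = (-1)^(a+b) * (-1)^b"
  by (cases "even b") (simp_all add: power_add)

lemma conv: "(GT * QQ) $ m $ n = (\<Sum>k=0..m. \<Sum>l=0..n. GT $ k $ l * QQ $ (m-k) $ (n-l))"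
  by (simp add: fps_mult_nth fps_sum_nth)

lemma conv2: "(GT * QQ) $ m $ n = (\<Sum>k=2..m. \<Sum>l=2..n. gregory_gf $ k $ l * QQ $ (m-k) $ (n-l))"
proof -
  have "(GT * QQ) $ m $ n = (\<Sum>k=2..m. \<Sum>l=0..n. GT $ k $ l * QQ $ (m-k) $ (n-l))"
    unfolding conv by (rule sum.mono_neutral_right) (auto simp: GT_def)
  also have "\<dots> = (\<Sum>k=2..m. \<Sum>l=2..n. GT $ k $ l * QQ $ (m-k) $ (n-l))"
    by (intro sum.cong refl sum.mono_neutral_right) (auto simp: GT_def)
  also have "\<dots> = (\<Sum>k=2..m. \<Sum>l=2..n. gregory_gf $ k $ l * QQ $ (m-k) $ (n-l))"
    by (intro sum.cong refl) (auto simp: GT_def)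
  finally show ?thesis .
qed

lemma rhs: "m \<ge> 2 \<Longrightarrow> n \<ge> 2 \<Longrightarrow>
  (GT * QQ) $ m $ n = (-1)^(m-1+(n-1)) / real (m-1+(n-1)+1) - LL $ m * LL $ n"
  unfolding GTQ by (simp add: mult.assoc bX_def bY_def logY_def)

theorem theorem5p6:
  fixes m n :: nat
  assumes "m \<ge> 2" and "n \<ge> 2"
  shows "(\<Sum>k=2..m. \<Sum>l=2..n. (-1) ^ (k + l) * gen_gregory k l
            / (real m - real k + real n - real l + 1))
         = 1 / (real m + real n - 1) - 1 / (real m * real n)"
proof -
  have tm: "(-1) ^ (k + l) * gen_gregory k l / (real m - real k + real n - real l + 1)
     = (-1)^(m+n) * (gregory_gf $ k $ l * QQ $ (m-k) $ (n-l))"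
    if "k \<in> {2..m}" "l \<in> {2..n}" for k l
  proof -
    have e: "real (m - k + (n - l) + 1) = real m - real k + real n - real l + 1"
      using that by (simp add: of_nat_diff)
    have s: "(-1::real)^(m-k+(n-l)) = (-1)^(m+n) * (-1)^(k+l)"
      using sign_split[of "m-k+(n-l)" "k+l"] that by simp
    show ?thesis unfolding gen_gregory_def QQ_nth e s by simp
  qed
  have "(\<Sum>k=2..m. \<Sum>l=2..n. (-1) ^ (k + l) * gen_gregory k l
            / (real m - real k + real n - real l + 1))
      = (-1)^(m+n) * (GT * QQ) $ m $ n"
    unfolding conv2 sum_distrib_left using tm by (intro sum.cong refl) auto
  also have "\<dots> = 1 / (real m + real n - 1) - 1 / (real m * real n)"
  proof -
    obtain a b where ab: "m = Suc (Suc a)" "n = Suc (Suc b)" using assms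
      by (metis add_2_eq_Suc le_Suc_ex)
    show ?thesis unfolding rhs[OF assms] using ab
      by (simp add: fps_ln_nth power_add field_simps)
  qed
  finally show ?thesis .
qed

end
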